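(* Let $n\ge2$, $X=\{1,\dots,n\}$, and let $\Sigma$ be the set of collections $\tau=\{J_1,\dots,J_{n-1}\}$ of subsets of $X$ with $|J_i|=i$ for each $i$. For $\tau\in\Sigma$ let $v_\tau=(a_1,\dots,a_n)^T\in\mathbb R^n$ where $a_j$ is the number of $i$ with $j\in J_i$. Then the convex hull of $\{v_\tau:\tau\in\Sigma\}$ is the $(n-1)$-permutohedron with parameters $m_1,\dots,m_n=0,1,\dots,n-1$, i.e. the convex hull of all coordinate permutations of $(0,1,\dots,n-1)$. *)

theory Defs
  imports "HOL-Analysis.Analysis"
begin

text \<open>The ground set X = {1..n} is modelled by the finite index type 'n with CARD('n) = n;
  vectors in R^n are elements of real^'n.  A collection tau = {J_1,...,J_{n-1}} is modelled
  as a function from indices i to subsets J_i (only i in {1..<n} is relevant).\<close>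

definition flag_collections :: "(nat \<Rightarrow> 'n::finite set) set" where
  "flag_collections = {\<tau>. \<forall>i\<in>{1..<CARD('n)}. card (\<tau> i) = i}"

definition vtau :: "(nat \<Rightarrow> 'n::finite set) \<Rightarrow> real^'n" where
  "vtau \<tau> = (\<chi> j. real (card {i\<in>{1..<CARD('n)}. j \<in> \<tau> i}))"

definition permutohedron :: "(nat \<Rightarrow> real) \<Rightarrow> (real^'n::finite) set" where
  "permutohedron m = convex hull
     {(\<chi> j. m (\<sigma> j)) | \<sigma>. bij_betw \<sigma> (UNIV :: 'n set) {0..<CARD('n)}}"

end

theory Submission imports Defs begin

lemma sorted_take_min:
  fixes a :: "'a \<Rightarrow> real"
  assumes "sorted (map a ys)" "distinct ys" "A \<subseteq> set ys" "card A = i"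
  shows "sum_list (map a (take i ys)) \<le> sum a A"
  using assms
proof (induction ys arbitrary: A i)
  case Nil
  then show ?case by simp
next
  case (Cons y ys)
  have finA: "finite A" using Cons.prems(3) finite_subset by blast
  show ?case
  proof (cases i)
    case 0
    then show ?thesis using Cons.prems finA by simp
  next
    case (Suc k)
    show ?thesis
    proof (cases "y \<in> A")
      case True
      have "sum_list (map a (take k ys)) \<le> sum a (A - {y})"
        using Cons.prems Suc True finA by (intro Cons.IH) auto
      then show ?thesis using Suc True finA by (simp add: sum.remove)
    next
      case False
      then obtain x where x: "x \<in> A" using Suc Cons.prems(4) card_0_eq finA by fastforce
      have "sum_list (map a (take k ys)) \<le> sum a (A - {x})"
        using Cons.prems Suc False finA x by (intro Cons.IH) auto
      moreover have "a y \<le> a x" using Cons.prems(1,3) x False by auto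
      ultimately show ?thesis using Suc x finA by (simp add: sum.remove)
    qed
  qed
qed

lemma card_filter_real:
  "finite I \<Longrightarrow> real (card {i\<in>I. P i}) = (\<Sum>i\<in>I. if P i then 1 else 0)"
  by (simp add: sum.inter_filter[symmetric])

lemma vtau_comp:
  fixes a :: "real^'n::finite"
  shows "vtau \<tau> $ j * a $ j = (\<Sum>i\<in>{1..<CARD('n)}. if j \<in> \<tau> i then a$j else 0)"
proof -
  have h: "real (card {i\<in>{1..<CARD('n)}. j \<in> \<tau> i}) = (\<Sum>i\<in>{1..<CARD('n)}. if j \<in> \<tau> i then 1 else 0)"
    by (rule card_filter_real) simp
  show ?thesis
    unfolding vtau_def vec_lambda_beta h sum_distrib_right by (rule sum.cong) auto
qed

lemma inner_vtau:
  fixes a :: "real^'n::finite"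
  shows "inner (vtau \<tau>) a = (\<Sum>i\<in>{1..<CARD('n)}. sum (\<lambda>j. a$j) (\<tau> i))"
proof -
  have "inner (vtau \<tau>) a = (\<Sum>j\<in>UNIV. (\<Sum>i\<in>{1..<CARD('n)}. if j \<in> \<tau> i then a$j else 0))"
    unfolding inner_vec_def inner_real_def vtau_comp ..
  also have "\<dots> = (\<Sum>i\<in>{1..<CARD('n)}. (\<Sum>j\<in>UNIV. if j \<in> \<tau> i then a$j else 0))"
    by (rule sum.swap)
  also have "\<dots> = (\<Sum>i\<in>{1..<CARD('n)}. sum (\<lambda>j. a$j) (\<tau> i))"
    by (simp add: sum.inter_filter[symmetric] Int_def)
  finally show ?thesis .
qed

lemma chain_sigma:
  fixes ys :: "'n::finite list"
  assumes d: "distinct ys" and s: "set ys = UNIV" and p: "p < CARD('n)"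
  shows "card {i\<in>{1..<CARD('n)}. ys!p \<in> set (take i ys)} = CARD('n) - 1 - p"
proof -
  have len: "length ys = CARD('n)" using distinct_card[OF d] s by simp
  have "{i\<in>{1..<CARD('n)}. ys!p \<in> set (take i ys)} = {Suc p..<CARD('n)}"
  proof (intro set_eqI iffI)
    fix i assume "i \<in> {i\<in>{1..<CARD('n)}. ys!p \<in> set (take i ys)}"
    then have i: "1 \<le> i" "i < CARD('n)" and m: "ys!p \<in> set (take i ys)" by auto
    from m obtain q where q: "q < length (take i ys)" "take i ys ! q = ys ! p"
      by (auto simp: in_set_conv_nth)
    then have "ys ! q = ys ! p" "q < i" "q < length ys" by auto
    then have "q = p" using nth_eq_iff_index_eq[OF d] p len by auto
    then show "i \<in> {Suc p..<CARD('n)}" using q i by auto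
  next
    fix i assume "i \<in> {Suc p..<CARD('n)}"
    then have i: "p < i" "i < CARD('n)" by auto
    have "take i ys ! p = ys ! p" using i by simp
    moreover have "p < length (take i ys)" using i len by simp
    ultimately have "ys ! p \<in> set (take i ys)" by (metis nth_mem)
    then show "i \<in> {i\<in>{1..<CARD('n)}. ys!p \<in> set (take i ys)}" using i by auto
  qed
  then show ?thesis by simp
qed

lemma chain_in_perm:
  fixes ys :: "'n::finite list"
  assumes d: "distinct ys" and s: "set ys = UNIV"
  shows "vtau (\<lambda>i. set (take i ys)) \<in> {(\<chi> j. real (\<sigma> j)) | \<sigma>. bij_betw \<sigma> (UNIV :: 'n set) {0..<CARD('n)}}"
proof -
  let ?n = "CARD('n)"
  define \<sigma> where "\<sigma> j = card {i\<in>{1..<?n}. j \<in> set (take i ys)}" for j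
  have len: "length ys = ?n" using distinct_card[OF d] s by simp
  have ex: "\<exists>p<?n. j = ys!p" for j
    using s len by (metis UNIV_I in_set_conv_nth)
  have sp: "\<sigma> (ys!p) = ?n - 1 - p" if "p < ?n" for p
    unfolding \<sigma>_def using chain_sigma[OF d s that] .
  have "bij_betw \<sigma> UNIV {0..<?n}"
  proof (rule bij_betw_byWitness[where f'="\<lambda>k. ys!(?n - 1 - k)"])
    show "\<forall>j\<in>UNIV. ys ! (?n - 1 - \<sigma> j) = j"
    proof
      fix j :: 'n
      obtain p where "p < ?n" "j = ys!p" using ex by blast
      then show "ys ! (?n - 1 - \<sigma> j) = j" using sp by simp
    qed
    show "\<forall>k\<in>{0..<?n}. \<sigma> (ys ! (?n - 1 - k)) = k"
      using sp by auto
    show "\<sigma> ` UNIV \<subseteq> {0..<?n}"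
    proof
      fix k assume "k \<in> range \<sigma>"
      then obtain j where "k = \<sigma> j" by auto
      moreover obtain p where "p < ?n" "j = ys!p" using ex by blast
      ultimately show "k \<in> {0..<?n}" using sp by auto
    qed
    show "(\<lambda>k. ys ! (?n - 1 - k)) ` {0..<?n} \<subseteq> UNIV" by simp
  qed
  moreover have "vtau (\<lambda>i. set (take i ys)) = (\<chi> j. real (\<sigma> j))"
    unfolding vtau_def \<sigma>_def ..
  ultimately show ?thesis by blast
qed

lemma perm_in_vtau:
  fixes \<sigma> :: "'n::finite \<Rightarrow> nat"
  assumes b: "bij_betw \<sigma> UNIV {0..<CARD('n)}"
  shows "(\<chi> j. real (\<sigma> j)) \<in> vtau ` (flag_collections :: (nat \<Rightarrow> 'n set) set)"
proof -
  let ?n = "CARD('n)"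
  define \<tau> where "\<tau> i = {j. ?n - i \<le> \<sigma> j}" for i
  have lt: "\<sigma> j < ?n" for j using b by (auto simp: bij_betw_def)
  have "\<tau> \<in> flag_collections"
    unfolding flag_collections_def mem_Collect_eq
  proof
    fix i assume i: "i \<in> {1..<?n}"
    have "bij_betw \<sigma> (\<tau> i) {?n - i..<?n}"
      by (rule bij_betw_subset[OF b]) (auto simp: \<tau>_def lt bij_betw_def image_iff, metis atLeastLessThan_iff b bij_betw_iff_bijections le0)
    then show "card (\<tau> i) = i" using i by (simp add: bij_betw_same_card)
  qed
  moreover have "vtau \<tau> = (\<chi> j. real (\<sigma> j))"
  proof -
    have "{i\<in>{1..<?n}. j \<in> \<tau> i} = {?n - \<sigma> j..<?n}" for j
      using lt[of j] by (auto simp: \<tau>_def)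
    then show ?thesis unfolding vtau_def using lt by (simp add: of_nat_diff less_imp_le)
  qed
  ultimately show ?thesis by force
qed

theorem proposition9:
  assumes "CARD('n::finite) \<ge> 2"
  shows "convex hull (vtau ` (flag_collections :: (nat \<Rightarrow> 'n set) set))
           = permutohedron (\<lambda>k. real k)"
proof -
  let ?n = "CARD('n)"
  define P where "P = {(\<chi> j. real (\<sigma> j)) | \<sigma>. bij_betw \<sigma> (UNIV :: 'n set) {0..<?n}}"
  have perm: "permutohedron (\<lambda>k. real k) = convex hull P"
    unfolding permutohedron_def P_def by simp
  have finP: "finite P"
  proof -
    have "{\<sigma>. bij_betw \<sigma> (UNIV :: 'n set) {0..<?n}} \<subseteq> Pi\<^sub>E UNIV (\<lambda>_. {0..<?n})"
      by (auto simp: PiE_UNIV_domain bij_betw_def)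
    then have "finite {\<sigma>. bij_betw \<sigma> (UNIV :: 'n set) {0..<?n}}"
      by (rule finite_subset) (rule finite_PiE, auto)
    then show ?thesis unfolding P_def
      by (simp add: setcompr_eq_image)
  qed
  have PV: "P \<subseteq> vtau ` (flag_collections :: (nat \<Rightarrow> 'n set) set)"
    unfolding P_def using perm_in_vtau by auto
  have VP: "vtau \<tau> \<in> convex hull P" if t: "\<tau> \<in> (flag_collections :: (nat \<Rightarrow> 'n set) set)" for \<tau>
  proof (rule ccontr)
    assume nin: "vtau \<tau> \<notin> convex hull P"
    have cl: "closed (convex hull P)"
      using finP by (intro compact_imp_closed finite_imp_compact_convex_hull)
    obtain a b where ab: "inner a (vtau \<tau>) < b" "\<forall>x\<in>convex hull P. inner a x > b"
      using separating_hyperplane_closed_point[OF convex_convex_hull cl nin] by blast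
    obtain xs :: "'n list" where xs: "distinct xs" "set xs = UNIV"
      using finite_distinct_list[of "UNIV :: 'n set"] by auto
    define ys where "ys = sort_key (\<lambda>j. a$j) xs"
    have ys: "distinct ys" "set ys = UNIV" "sorted (map (\<lambda>j. a$j) ys)"
      using xs unfolding ys_def by auto
    have le: "sum (\<lambda>j. a$j) (set (take i ys)) \<le> sum (\<lambda>j. a$j) (\<tau> i)" if "i \<in> {1..<?n}" for i
    proof -
      have "card (\<tau> i) = i" using t that unfolding flag_collections_def by auto
      then have "sum_list (map (\<lambda>j. a$j) (take i ys)) \<le> sum (\<lambda>j. a$j) (\<tau> i)"
        using ys by (intro sorted_take_min) auto
      then show ?thesis using ys(1) by (simp add: sum.distinct_set_conv_list)
    qed
    have L: "inner (vtau (\<lambda>i. set (take i ys))) a \<le> inner (vtau \<tau>) a"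
      unfolding inner_vtau using le by (rule sum_mono)
    have "vtau (\<lambda>i. set (take i ys)) \<in> P"
      using chain_in_perm[OF ys(1,2)] unfolding P_def .
    then have "vtau (\<lambda>i. set (take i ys)) \<in> convex hull P"
      by (rule hull_inc)
    then have "b < inner a (vtau (\<lambda>i. set (take i ys)))" by (rule ab(2)[rule_format])
    moreover have "inner a (vtau (\<lambda>i. set (take i ys))) \<le> inner a (vtau \<tau>)"
      using L by (simp only: inner_commute)
    ultimately show False using ab(1) by linarith
  qed
  have "convex hull (vtau ` (flag_collections :: (nat \<Rightarrow> 'n set) set)) \<subseteq> convex hull P"
    by (rule hull_minimal) (auto simp: convex_convex_hull intro: VP)
  moreover have "convex hull P \<subseteq> convex hull (vtau ` (flag_collections :: (nat \<Rightarrow> 'n set) set))"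
    by (rule hull_mono[OF PV])
  ultimately show ?thesis using perm by auto
qed

end
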